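(* Fix $y\in\mathbb{R}^d$ and measurable $g:\mathbb{R}^d\to\mathbb{R}$. Let $X,V$ be independent $\mathbb{R}^d$-valued random vectors, $Y=X+V$, where $P_V$ has a Lebesgue density $f_V$ and $\varphi_V(\omega)\neq0$ for Lebesgue-a.e. $\omega$. Assume $\lambda_{g,V,y}(x)=g(x)f_V(y-x)\in\Xi^0(\mathbb{R}^d;\mathbb{C})$, $\widetilde{\lambda}_{g,V,y}\in L^1(\mathbb{R}^d;\mathbb{C})$, and $\mathcal{Q}_{g,V,y}\in L^1(\mathbb{R}^d;\mathbb{C})$. Then for every $f\in\mathcal{A}_V(\mathbb{R}^d)$, \[ \mathcal{T}_{g,V,y}[f]=\int_{\mathbb{R}^d}\mathcal{Q}_{g,V,y}^\sharp(z)f(z)\,dz, \] where $\mathcal{Q}^\sharp_{g,V,y}$ is real-valued. In particular, whenever $f_Y(y)>0$, \[ \mathbb{E}[g(X)\mid Y=y]=\frac{1}{f_Y(y)}\int_{\mathbb{R}^d}\mathcal{Q}^\sharp_{g,V,y}(z)f_Y(z)\,dz=\frac{1}{f_Y(y)}\mathbb{E}\bigl[\mathcal{Q}^\sharp_{g,V,y}(Y)\bigr]. \]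
   Context: $\widetilde\psi(\omega)=\int e^{i\omega^\top x}\psi(x)dx$, $\psi^\sharp(x)=(2\pi)^{-d}\int e^{-i\omega^\top x}\psi(\omega)d\omega$; $\varphi_V(\omega)=\mathbb{E}[e^{i\omega^\top V}]$. $\Xi^0=C_0(\mathbb{R}^d;\mathbb{C})\cap L^1(\mathbb{R}^d;\mathbb{C})$. $\mathcal{Q}_{g,V,y}(\omega)=\widetilde{\lambda}_{g,V,y}(\omega)/\varphi_V(-\omega)$ where $\varphi_V(-\omega)\neq0$, and $0$ otherwise. $\mathcal{A}_V(\mathbb{R}^d)=\{f_V*\mu:\mu\text{ finite signed Radon measure}\}$, normed by $\|f_V*\mu\|_{\mathcal{A}_V}=\|\mu\|_{TV}$ (representing measure unique); $\mathcal{T}_{g,V,y}$ is the unique continuous linear functional on $\mathcal{A}_V$ with $\mathcal{T}_{g,V,y}[f_V*\mu]=\int\lambda_{g,V,y}\,d\mu$. $f_Y=f_V*P_X$ and $\mathbb{E}[g(X)\mid Y=y]=f_Y(y)^{-1}\int g(x)f_V(y-x)dP_X(x)$. *)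

theory Defs
  imports "HOL-Probability.Probability"
begin

definition fourier :: "('a::euclidean_space \<Rightarrow> complex) \<Rightarrow> 'a \<Rightarrow> complex" where
  "fourier \<psi> \<omega> = (LINT x|lborel. cis (\<omega> \<bullet> x) * \<psi> x)"

definition inv_fourier :: "('a::euclidean_space \<Rightarrow> complex) \<Rightarrow> 'a \<Rightarrow> complex" where
  "inv_fourier \<psi> x = complex_of_real (1 / (2 * pi) ^ DIM('a)) *
      (LINT \<omega>|lborel. cis (- (\<omega> \<bullet> x)) * \<psi> \<omega>)"

definition charfun :: "'b measure \<Rightarrow> ('b \<Rightarrow> 'a::euclidean_space) \<Rightarrow> 'a \<Rightarrow> complex" where
  "charfun M V \<omega> = (LINT m|M. cis (\<omega> \<bullet> V m))"

definition Xi0 :: "('a::euclidean_space \<Rightarrow> complex) set" where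
  "Xi0 = {\<psi>. continuous_on UNIV \<psi> \<and> (\<psi> \<longlongrightarrow> 0) at_infinity \<and> integrable lborel \<psi>}"

definition lam :: "('a::euclidean_space \<Rightarrow> real) \<Rightarrow> ('a \<Rightarrow> real) \<Rightarrow> 'a \<Rightarrow> 'a \<Rightarrow> complex" where
  "lam g fV y x = complex_of_real (g x * fV (y - x))"

definition Qfun :: "'b measure \<Rightarrow> ('b \<Rightarrow> 'a::euclidean_space) \<Rightarrow> ('a \<Rightarrow> real) \<Rightarrow> ('a \<Rightarrow> real)
     \<Rightarrow> 'a \<Rightarrow> 'a \<Rightarrow> complex" where
  "Qfun M V g fV y \<omega> =
     (if charfun M V (- \<omega>) \<noteq> 0 then fourier (lam g fV y) \<omega> / charfun M V (- \<omega>) else 0)"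

text \<open>A finite signed Borel (= Radon, on R^d) measure is represented as mu1 - mu2 with mu1, mu2
  finite Borel measures. Convolution (f_V * mu)(z) = int f_V(z - x) d mu(x).\<close>
definition conv_signed :: "('a::euclidean_space \<Rightarrow> real) \<Rightarrow> 'a measure \<Rightarrow> 'a measure \<Rightarrow> 'a \<Rightarrow> real" where
  "conv_signed fV \<mu>1 \<mu>2 z = (LINT x|\<mu>1. fV (z - x)) - (LINT x|\<mu>2. fV (z - x))"

text \<open>T_{g,V,y}[f_V * mu] = int lambda d mu.\<close>
definition T_signed :: "('a::euclidean_space \<Rightarrow> real) \<Rightarrow> ('a \<Rightarrow> real) \<Rightarrow> 'a
     \<Rightarrow> 'a measure \<Rightarrow> 'a measure \<Rightarrow> complex" where
  "T_signed g fV y \<mu>1 \<mu>2 = (LINT x|\<mu>1. lam g fV y x) - (LINT x|\<mu>2. lam g fV y x)"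

definition densY :: "'b measure \<Rightarrow> ('b \<Rightarrow> 'a::euclidean_space) \<Rightarrow> ('a \<Rightarrow> real) \<Rightarrow> 'a \<Rightarrow> real" where
  "densY M X fV z = (LINT x|distr M borel X. fV (z - x))"

definition cond_exp_at :: "'b measure \<Rightarrow> ('b \<Rightarrow> 'a::euclidean_space) \<Rightarrow> ('a \<Rightarrow> real) \<Rightarrow> ('a \<Rightarrow> real)
     \<Rightarrow> 'a \<Rightarrow> real" where
  "cond_exp_at M X fV g y = (1 / densY M X fV y) * (LINT x|distr M borel X. g x * fV (y - x))"

end

theory Submission
  imports Defs
begin


lemma lborel_integral_affine_eu:
  fixes f :: "'a::euclidean_space \<Rightarrow> 'b::{banach, second_countable_topology}"
  assumes c: "c \<noteq> 0" and f[measurable]: "f \<in> borel_measurable borel"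
  shows "integral\<^sup>L lborel f = \<bar>c\<bar>^DIM('a) *\<^sub>R (\<integral>x. f (t + c *\<^sub>R x) \<partial>lborel)"
    and "integrable lborel f \<longleftrightarrow> integrable lborel (\<lambda>x. f (t + c *\<^sub>R x))"
proof -
  have e: "lborel = density (distr lborel borel (\<lambda>x. t + c *\<^sub>R x)) (\<lambda>_. \<bar>c\<bar>^DIM('a))"
    using lborel_affine[OF c, of t] by simp
  have "integral\<^sup>L lborel f = integral\<^sup>L (density (distr lborel borel (\<lambda>x::'a. t + c *\<^sub>R x)) (\<lambda>_. \<bar>c\<bar>^DIM('a))) f"
    using e by (rule arg_cong)
  also have "\<dots> = integral\<^sup>L (distr lborel borel (\<lambda>x::'a. t + c *\<^sub>R x)) (\<lambda>x. \<bar>c\<bar>^DIM('a) *\<^sub>R f x)"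
    by (subst integral_density) auto
  also have "\<dots> = (\<integral>x. \<bar>c\<bar>^DIM('a) *\<^sub>R f (t + c *\<^sub>R x) \<partial>lborel)"
    by (subst integral_distr) auto
  finally show "integral\<^sup>L lborel f = \<bar>c\<bar>^DIM('a) *\<^sub>R (\<integral>x. f (t + c *\<^sub>R x) \<partial>lborel)" by simp
  have "integrable lborel f \<longleftrightarrow> integrable (density (distr lborel borel (\<lambda>x::'a. t + c *\<^sub>R x)) (\<lambda>_. \<bar>c\<bar>^DIM('a))) f"
    using e by (rule arg_cong)
  also have "\<dots> \<longleftrightarrow> integrable (distr lborel borel (\<lambda>x::'a. t + c *\<^sub>R x)) (\<lambda>x. \<bar>c\<bar>^DIM('a) *\<^sub>R f x)"
    by (subst integrable_density) auto
  also have "\<dots> \<longleftrightarrow> integrable lborel (\<lambda>x. \<bar>c\<bar>^DIM('a) *\<^sub>R f (t + c *\<^sub>R x))"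
    by (subst integrable_distr_eq) auto
  also have "\<dots> \<longleftrightarrow> integrable lborel (\<lambda>x. f (t + c *\<^sub>R x))"
  proof
    assume "integrable lborel (\<lambda>x. \<bar>c\<bar>^DIM('a) *\<^sub>R f (t + c *\<^sub>R x))"
    then have "integrable lborel (\<lambda>x. (1 / \<bar>c\<bar>^DIM('a)) *\<^sub>R (\<bar>c\<bar>^DIM('a) *\<^sub>R f (t + c *\<^sub>R x)))"
      by (rule integrable_scaleR_right)
    then show "integrable lborel (\<lambda>x. f (t + c *\<^sub>R x))" using c by simp
  qed (rule integrable_scaleR_right)
  finally show "integrable lborel f \<longleftrightarrow> integrable lborel (\<lambda>x. f (t + c *\<^sub>R x))" .
qed

lemma gauss1:
  fixes a c :: real assumes c: "c > 0"
  shows "has_bochner_integral lborel (\<lambda>t. cis (t * a) * complex_of_real (exp (- (t^2) / (2 * c^2))))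
           (complex_of_real (c * sqrt (2 * pi) * exp (- ((c * a)^2) / 2)))"
proof -
  have m: "(\<lambda>x. std_normal_density x *\<^sub>R iexp (c * a * x)) \<in> borel_measurable borel" by measurable
  have int0: "integrable lborel (\<lambda>x. std_normal_density x *\<^sub>R iexp (c * a * x))"
  proof (rule Bochner_Integration.integrable_bound[where f="\<lambda>x. std_normal_density x"])
    show "integrable lborel std_normal_density"
      using integrable_std_normal_moment_abs[of 0] by simp
    show "AE x in lborel. norm (std_normal_density x *\<^sub>R iexp (c * a * x)) \<le> norm (std_normal_density x)"
      by (auto simp: norm_mult normal_density_nonneg)
  qed simp
  have "char std_normal_distribution (c * a) = (\<integral>x. std_normal_density x *\<^sub>R iexp (c * a * x) \<partial>lborel)"
    unfolding char_def by (subst integral_density) (auto simp: normal_density_nonneg)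
  then have v0: "(\<integral>x. std_normal_density x *\<^sub>R iexp (c * a * x) \<partial>lborel) = exp (- ((c*a)^2) / 2)"
    by (simp add: char_std_normal_distribution)
  have eqf: "\<And>x. std_normal_density x *\<^sub>R iexp (c * a * x) = 
     complex_of_real (1 / sqrt (2 * pi)) * ((\<lambda>t. cis (t * a) * complex_of_real (exp (- (t^2) / (2 * c^2)))) (0 + c * x))"
    using c by (auto simp: std_normal_density_def cis_conv_exp scaleR_conv_of_real power_mult_distrib mult_ac)
  have hb: "has_bochner_integral lborel (\<lambda>x. std_normal_density x *\<^sub>R iexp (c * a * x)) (exp (- ((c*a)^2) / 2))"
    using int0 v0 by (simp add: has_bochner_integral_iff)
  then have "has_bochner_integral lborel (\<lambda>x. complex_of_real (sqrt (2 * pi)) * (std_normal_density x *\<^sub>R iexp (c * a * x))) (complex_of_real (sqrt (2 * pi)) * exp (- ((c*a)^2) / 2))"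
    by (rule has_bochner_integral_mult_right)
  then have "has_bochner_integral lborel (\<lambda>x. (\<lambda>t. cis (t * a) * complex_of_real (exp (- (t^2) / (2 * c^2)))) (0 + c * x)) (complex_of_real (sqrt (2 * pi)) * exp (- ((c*a)^2) / 2))"
    unfolding eqf by (simp add: mult.assoc[symmetric] of_real_mult[symmetric] del: of_real_mult)
  then have "has_bochner_integral lborel (\<lambda>t. cis (t * a) * complex_of_real (exp (- (t^2) / (2 * c^2))))
     (\<bar>c\<bar> *\<^sub>R (complex_of_real (sqrt (2 * pi)) * exp (- ((c*a)^2) / 2)))"
    using c by (subst lborel_has_bochner_integral_real_affine_iff[where c=c and t=0]) auto
  then show ?thesis using c by (simp add: scaleR_conv_of_real field_simps)
qed


lemma borel_measurable_cis[measurable]: "cis \<in> borel_measurable borel"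
  by (intro borel_measurable_continuous_onI continuous_intros)

lemma cis_sum: "finite I \<Longrightarrow> cis (sum f I) = (\<Prod>i\<in>I. cis (f i))"
  by (induction I rule: finite_induct) (auto simp: cis_mult[symmetric])

lemma gaussd:
  fixes s :: "'a::euclidean_space" and c :: real assumes c: "c > 0"
  shows "has_bochner_integral lborel (\<lambda>w::'a. cis (w \<bullet> s) * complex_of_real (exp (- ((norm w)^2) / (2 * c^2))))
           (complex_of_real ((c * sqrt (2 * pi))^DIM('a) * exp (- (c^2 * (norm s)^2) / 2)))"
proof -
  interpret P: product_sigma_finite "\<lambda>_::'a. lborel::real measure" by standard
  define h where "h b t = cis (t * (b \<bullet> s)) * complex_of_real (exp (- (t^2) / (2 * c^2)))" for b :: 'a and t :: real
  let ?F = "\<lambda>w::'a. cis (w \<bullet> s) * complex_of_real (exp (- ((norm w)^2) / (2 * c^2)))"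
  have hb: "\<And>b. has_bochner_integral lborel (h b) (complex_of_real (c * sqrt (2 * pi) * exp (- ((c * (b \<bullet> s))^2) / 2)))"
    unfolding h_def by (rule gauss1[OF c])
  have eq: "?F (\<Sum>b\<in>Basis. x b *\<^sub>R b) = (\<Prod>b\<in>Basis. h b (x b))" for x :: "'a \<Rightarrow> real"
  proof -
    have i: "(\<Sum>b\<in>Basis. x b *\<^sub>R b) \<bullet> s = (\<Sum>b\<in>Basis. x b * (b \<bullet> s))"
      by (simp add: inner_sum_left)
    have n: "(norm (\<Sum>b\<in>Basis. x b *\<^sub>R b))^2 = (\<Sum>b\<in>Basis. (x b)^2)"
      unfolding power2_norm_eq_inner
      by (simp add: inner_sum_left inner_sum_right inner_Basis if_distrib sum.delta power2_eq_square cong: if_cong)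
    show ?thesis
      unfolding i n h_def prod.distrib cis_sum[OF finite_Basis]
      by (simp add: exp_sum[symmetric] sum_divide_distrib[symmetric] sum_negf[symmetric] of_real_prod[symmetric] del: of_real_prod)
        (simp add: sum_divide_distrib[symmetric] sum_negf)
  qed
  have mF: "?F \<in> borel_measurable borel" by measurable
  have int: "integrable (Pi\<^sub>M Basis (\<lambda>_. lborel)) (\<lambda>x. \<Prod>b\<in>Basis. h b (x b))"
    using hb by (intro P.product_integrable_prod) (auto simp: has_bochner_integral_iff)
  have val: "(\<integral>x. (\<Prod>b\<in>Basis. h b (x b)) \<partial>Pi\<^sub>M Basis (\<lambda>_. lborel)) = (\<Prod>b\<in>Basis. complex_of_real (c * sqrt (2 * pi) * exp (- ((c * (b \<bullet> s))^2) / 2)))"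
    using hb by (subst P.product_integral_prod) (auto simp: has_bochner_integral_iff)
  have val2: "(\<Prod>b\<in>(Basis::'a set). complex_of_real (c * sqrt (2 * pi) * exp (- ((c * (b \<bullet> s))^2) / 2)))
     = complex_of_real ((c * sqrt (2 * pi))^DIM('a) * exp (- (c^2 * (norm s)^2) / 2))"
  proof -
    have "(norm s)^2 = (\<Sum>b\<in>(Basis::'a set). (b \<bullet> s)^2)"
      unfolding power2_norm_eq_inner by (simp add: euclidean_inner[of s s] power2_eq_square inner_commute)
    then show ?thesis
      by (simp add: prod.distrib exp_sum[symmetric] power_mult_distrib sum_divide_distrib[symmetric] sum_negf[symmetric]
          sum_distrib_left[symmetric] of_real_prod[symmetric] del: of_real_prod)
        (simp add: sum_negf sum_divide_distrib[symmetric] sum_distrib_left[symmetric])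
  qed
  have "has_bochner_integral (distr (Pi\<^sub>M Basis (\<lambda>_. lborel)) borel (\<lambda>f. \<Sum>b\<in>Basis. f b *\<^sub>R b)) ?F
     (complex_of_real ((c * sqrt (2 * pi))^DIM('a) * exp (- (c^2 * (norm s)^2) / 2)))"
    unfolding has_bochner_integral_iff
    apply (subst integrable_distr_eq integral_distr, measurable)+
    unfolding eq using int val val2 by simp
  then show ?thesis by (simp add: lborel_eq[symmetric])
qed


lemma C0_bounded:
  fixes \<psi> :: "'a::euclidean_space \<Rightarrow> 'b::real_normed_vector"
  assumes "continuous_on UNIV \<psi>" "(\<psi> \<longlongrightarrow> 0) at_infinity"
  shows "\<exists>B. \<forall>x. norm (\<psi> x) \<le> B"
proof -
  have "\<forall>\<^sub>F x in at_infinity. norm (\<psi> x) < 1"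
    using assms(2) by (simp add: tendsto_iff dist_norm)
  then obtain b where b: "\<And>x. norm x \<ge> b \<Longrightarrow> norm (\<psi> x) < 1"
    unfolding eventually_at_infinity by blast
  have "compact (\<psi> ` cball 0 b)"
    by (rule compact_continuous_image) (auto intro: continuous_on_subset[OF assms(1)])
  then obtain B' where B': "\<And>y. y \<in> \<psi> ` cball 0 b \<Longrightarrow> norm y \<le> B'"
    using compact_imp_bounded bounded_iff by metis
  have "norm (\<psi> x) \<le> max 1 B'" for x
  proof (cases "norm x \<ge> b")
    case True then show ?thesis using b[of x] by auto
  next
    case False then show ?thesis using B'[of "\<psi> x"] by auto
  qed
  then show ?thesis by blast
qed

lemma sqrt_pow_sq: "sqrt (2*pi) ^ n * sqrt (2*pi) ^ n = (2*pi)^n"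
proof -
  have "sqrt (2*pi) ^ n * sqrt (2*pi) ^ n = (sqrt (2*pi) * sqrt (2*pi)) ^ n"
    by (rule power_mult_distrib[symmetric])
  also have "sqrt (2*pi) * sqrt (2*pi) = 2 * pi" by simp
  finally show ?thesis .
qed

lemma fourier_inversion:
  fixes \<psi> :: "'a::euclidean_space \<Rightarrow> complex"
  assumes cont: "continuous_on UNIV \<psi>" and lim0: "(\<psi> \<longlongrightarrow> 0) at_infinity"
    and int: "integrable lborel \<psi>" and intF: "integrable lborel (fourier \<psi>)"
  shows "inv_fourier (fourier \<psi>) x = \<psi> x"
proof -
  obtain B where B: "\<And>x. norm (\<psi> x) \<le> B" using C0_bounded[OF cont lim0] by blast
  have m\<psi>[measurable]: "\<psi> \<in> borel_measurable borel" using cont by (rule borel_measurable_continuous_onI)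
  have mF[measurable]: "fourier \<psi> \<in> borel_measurable borel"
    using borel_measurable_integrable[OF intF] by simp
  define c where "c n = real (Suc n)" for n
  have cpos: "c n > 0" for n by (simp add: c_def)
  define G where "G n w = exp (- ((norm w)^2) / (2 * (c n)^2))" for n :: nat and w :: 'a
  define K where "K n s = complex_of_real ((c n * sqrt (2 * pi))^DIM('a) * exp (- ((c n)^2 * (norm s)^2) / 2))" for n :: nat and s :: 'a
  have mG[measurable]: "(\<lambda>w. G n w) \<in> borel_measurable borel" for n unfolding G_def by measurable
  have gK: "has_bochner_integral lborel (\<lambda>w. cis (w \<bullet> s) * complex_of_real (G n w)) (K n s)" for n s
    unfolding G_def K_def using gaussd[OF cpos[of n], of s] by simp
  have intG: "integrable lborel (\<lambda>w. G n w)" for n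
  proof -
    have "integrable lborel (\<lambda>w. cis (w \<bullet> 0) * complex_of_real (G n w))"
      using gK[where n=n and s=0] by (simp add: has_bochner_integral_iff)
    then have "integrable lborel (\<lambda>w. Re (cis (w \<bullet> 0) * complex_of_real (G n w)))"
      by (rule integrable_Re)
    then show ?thesis by simp
  qed
  define L where "L = (\<integral>w. cis (- (w \<bullet> x)) * fourier \<psi> w \<partial>lborel)"
  define I where "I n = (\<integral>w. cis (- (w \<bullet> x)) * fourier \<psi> w * complex_of_real (G n w) \<partial>lborel)" for n
  have I_lim: "I \<longlonglongrightarrow> L"
    unfolding I_def L_def
  proof (rule integral_dominated_convergence[where w="\<lambda>w. norm (fourier \<psi> w)"])
    show "integrable lborel (\<lambda>w. norm (fourier \<psi> w))" using intF by simp
    show "AE w in lborel. (\<lambda>n. cis (- (w \<bullet> x)) * fourier \<psi> w * complex_of_real (G n w))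
        \<longlonglongrightarrow> cis (- (w \<bullet> x)) * fourier \<psi> w"
    proof (intro AE_I2)
      fix w :: 'a

      have "(\<lambda>n. exp (- ((norm w)^2/2) * (inverse (real (Suc n)))^2)) \<longlonglongrightarrow> exp (- ((norm w)^2/2) * 0^2)"
        by (intro tendsto_intros LIMSEQ_inverse_real_of_nat)
      moreover have "G n w = exp (- ((norm w)^2/2) * (inverse (real (Suc n)))^2)" for n
        unfolding G_def c_def by (simp add: field_simps power2_eq_square)
      ultimately have "(\<lambda>n. G n w) \<longlonglongrightarrow> exp (- 0)" by simp
      then have "(\<lambda>n. complex_of_real (G n w)) \<longlonglongrightarrow> 1"
        by (metis exp_zero minus_zero of_real_1 tendsto_of_real)
      then show "(\<lambda>n. cis (- (w \<bullet> x)) * fourier \<psi> w * complex_of_real (G n w))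
        \<longlonglongrightarrow> cis (- (w \<bullet> x)) * fourier \<psi> w"
        using tendsto_mult[OF tendsto_const] by fastforce
    qed
    show "AE w in lborel. norm (cis (- (w \<bullet> x)) * fourier \<psi> w * complex_of_real (G n w)) \<le> norm (fourier \<psi> w)" for n
      by (intro AE_I2) (auto simp: norm_mult G_def intro!: mult_right_le_one_le)
  qed measurable
  define S where "S = complex_of_real (sqrt (2*pi) ^ DIM('a))"
  define E where "E u = complex_of_real (exp (- ((norm u)^2) / 2))" for u :: 'a
  have mE[measurable]: "E \<in> borel_measurable borel" unfolding E_def by measurable
  have G0: "G 0 u = exp (- ((norm u)^2) / 2)" for u unfolding G_def c_def by simp
  have intE: "integrable lborel (\<lambda>u::'a. exp (- ((norm u)^2) / 2))"
    using intG[of 0] unfolding G0 .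
  have intE_val: "(\<integral>u. E u \<partial>lborel) = S"
  proof -
    have "(\<integral>u. E u \<partial>lborel) = (\<integral>w. cis (w \<bullet> 0) * complex_of_real (G 0 w) \<partial>lborel)"
      unfolding E_def G0 by simp
    also have "\<dots> = K 0 0" using gK[where n=0 and s=0] by (simp add: has_bochner_integral_iff)
    finally show ?thesis unfolding K_def S_def c_def by simp
  qed
  define J where "J n = (\<integral>u. \<psi> (x + (1 / c n) *\<^sub>R u) * E u \<partial>lborel)" for n
  have IJ: "I n = S * J n" for n
  proof -
    have PS: "pair_sigma_finite (lborel :: 'a measure) (lborel :: 'a measure)" by standard
    define f where "f w t = cis (- (w \<bullet> x)) * complex_of_real (G n w) * (cis (w \<bullet> t) * \<psi> t)" for w t :: 'a
    have mf[measurable]: "(\<lambda>(w, t). f w t) \<in> borel_measurable (lborel \<Otimes>\<^sub>M lborel)"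
      unfolding f_def by measurable
    have nf: "norm (f w t) = G n w * norm (\<psi> t)" for w t
      unfolding f_def by (simp add: norm_mult G_def)
    have intf: "integrable (lborel \<Otimes>\<^sub>M lborel) (\<lambda>(w, t). f w t)"
    proof (rule pair_sigma_finite.Fubini_integrable[OF PS])
      show "integrable lborel (\<lambda>w. \<integral>t. norm ((\<lambda>(w, t). f w t) (w, t)) \<partial>lborel)"
        unfolding split nf by (simp add: intG)
      show "AE w in lborel. integrable lborel (\<lambda>t. (\<lambda>(w, t). f w t) (w, t))"
      proof (intro AE_I2)
        fix w
        show "integrable lborel (\<lambda>t. (\<lambda>(w, t). f w t) (w, t))"
          unfolding f_def split
          by (intro integrable_mult_right Bochner_Integration.integrable_bound[OF int]) (auto simp: norm_mult)
      qed
    qed fact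
    have "(\<integral>t. (\<integral>w. f w t \<partial>lborel) \<partial>lborel) = (\<integral>w. (\<integral>t. f w t \<partial>lborel) \<partial>lborel)"
      using intf by (rule pair_sigma_finite.Fubini_integral[OF PS])
    moreover have "(\<integral>t. f w t \<partial>lborel) = cis (- (w \<bullet> x)) * fourier \<psi> w * complex_of_real (G n w)" for w
      unfolding f_def fourier_def integral_mult_right_zero by (simp add: mult_ac)
    moreover have "(\<integral>w. f w t \<partial>lborel) = \<psi> t * K n (t - x)" for t
    proof -
      have "f w t = \<psi> t * (cis (w \<bullet> (t - x)) * complex_of_real (G n w))" for w
        unfolding f_def by (simp add: inner_diff_right cis_mult[symmetric] mult_ac) (simp add: cis_mult)
      then have "(\<integral>w. f w t \<partial>lborel) = \<psi> t * (\<integral>w. cis (w \<bullet> (t - x)) * complex_of_real (G n w) \<partial>lborel)"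
        by simp
      also have "\<dots> = \<psi> t * K n (t - x)"
        using gK[where n=n and s="t - x"] by (simp add: has_bochner_integral_iff)
      finally show ?thesis .
    qed
    ultimately have "I n = (\<integral>t. \<psi> t * K n (t - x) \<partial>lborel)"
      unfolding I_def by simp
    also have "\<dots> = \<bar>1 / c n\<bar>^DIM('a) *\<^sub>R (\<integral>u. \<psi> (x + (1 / c n) *\<^sub>R u) * K n ((x + (1 / c n) *\<^sub>R u) - x) \<partial>lborel)"
      using cpos[of n] by (intro lborel_integral_affine_eu) (auto simp: K_def)
    also have "\<dots> = S * J n"
    proof -
      have "K n ((x + (1 / c n) *\<^sub>R u) - x) = complex_of_real (c n ^ DIM('a)) * S * E u" for u
        using cpos[of n] unfolding K_def S_def E_def
        by (simp add: power_mult_distrib field_simps)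
      then have eqi: "\<psi> (x + (1 / c n) *\<^sub>R u) * K n ((x + (1 / c n) *\<^sub>R u) - x)
          = (complex_of_real (c n ^ DIM('a)) * S) * (\<psi> (x + (1 / c n) *\<^sub>R u) * E u)" for u
        by (simp add: mult_ac)
      have "(\<integral>u. \<psi> (x + (1 / c n) *\<^sub>R u) * K n ((x + (1 / c n) *\<^sub>R u) - x) \<partial>lborel)
          = (complex_of_real (c n ^ DIM('a)) * S) * J n"
        unfolding eqi integral_mult_right_zero J_def ..
      then show ?thesis
        using cpos[of n] by (simp add: scaleR_conv_of_real power_divide)
    qed
    finally show ?thesis .
  qed
  have J_lim: "J \<longlonglongrightarrow> \<psi> x * S"
  proof -
    have "J \<longlonglongrightarrow> (\<integral>u. \<psi> x * E u \<partial>lborel)"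
      unfolding J_def
    proof (rule integral_dominated_convergence[where w="\<lambda>u::'a. B * exp (- ((norm u)^2) / 2)"])
      show "integrable lborel (\<lambda>u::'a. B * exp (- ((norm u)^2) / 2))" using intE by simp
      show "AE u in lborel. (\<lambda>n. \<psi> (x + (1 / c n) *\<^sub>R u) * E u) \<longlonglongrightarrow> \<psi> x * E u"
      proof (intro AE_I2 tendsto_mult tendsto_const)
        fix u :: 'a
        have "(\<lambda>n. x + (1 / c n) *\<^sub>R u) \<longlonglongrightarrow> x + 0 *\<^sub>R u"
          unfolding c_def using LIMSEQ_inverse_real_of_nat
          by (intro tendsto_intros) (simp add: inverse_eq_divide)
        then have "(\<lambda>n. x + (1 / c n) *\<^sub>R u) \<longlonglongrightarrow> x" by simp
        moreover have "isCont \<psi> x" using cont by (simp add: continuous_on_eq_continuous_at)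
        ultimately show "(\<lambda>n. \<psi> (x + (1 / c n) *\<^sub>R u)) \<longlonglongrightarrow> \<psi> x"
          by (rule isCont_tendsto_compose[rotated])
      qed
      show "AE u in lborel. norm (\<psi> (x + (1 / c n) *\<^sub>R u) * E u) \<le> B * exp (- ((norm u)^2) / 2)" for n
        by (intro AE_I2) (auto simp: E_def norm_mult intro!: mult_right_mono B)
    qed measurable
    then show ?thesis using intE_val by simp
  qed
  have "I \<longlonglongrightarrow> S * (\<psi> x * S)"
    unfolding IJ by (intro tendsto_intros J_lim)
  with I_lim have LS: "L = S * (\<psi> x * S)" by (rule LIMSEQ_unique)
  have SS: "S * S = complex_of_real ((2 * pi) ^ DIM('a))"
    unfolding S_def of_real_mult[symmetric] sqrt_pow_sq ..
  have Leq: "L = complex_of_real ((2 * pi) ^ DIM('a)) * \<psi> x"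
    using LS SS by algebra
  have "complex_of_real (1 / (2 * pi) ^ DIM('a)) * complex_of_real ((2 * pi) ^ DIM('a)) = 1"
    by (simp flip: of_real_mult)
  then show ?thesis
    unfolding inv_fourier_def L_def[symmetric] Leq by (simp only: mult.assoc[symmetric]) simp
qed



lemma lborel_translate:
  fixes f :: "'a::euclidean_space \<Rightarrow> 'b::{banach, second_countable_topology}"
  assumes [measurable]: "f \<in> borel_measurable borel"
  shows "(\<integral>z. f (z + a) \<partial>lborel) = integral\<^sup>L lborel f"
    and "integrable lborel (\<lambda>z. f (z + a)) \<longleftrightarrow> integrable lborel f"
  using lborel_integral_affine_eu[where c=1 and t=a and f=f] by (simp_all add: add.commute)

lemma lborel_reflect:
  fixes f :: "'a::euclidean_space \<Rightarrow> 'b::{banach, second_countable_topology}"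
  assumes [measurable]: "f \<in> borel_measurable borel"
  shows "(\<integral>z. f (- z) \<partial>lborel) = integral\<^sup>L lborel f"
  using lborel_integral_affine_eu[where c="-1" and t=0 and f=f] by simp

lemma AE_reflect:
  fixes P :: "'a::euclidean_space \<Rightarrow> bool"
  assumes [measurable]: "Measurable.pred borel P" and ae: "AE w in lborel. P w"
  shows "AE w in lborel. P (- w)"
proof -
  have e: "lborel = distr lborel borel (\<lambda>x::'a. - x)"
    using lborel_affine[of "-1::real" "0::'a"] by (simp add: density_1)
  have "AE w in distr lborel borel (\<lambda>x::'a. - x). P (- w)"
    using ae by (subst AE_distr_iff) auto
  then show ?thesis by (subst e)
qed

locale setting =
  fixes M :: "'b measure" and V :: "'b \<Rightarrow> 'a::euclidean_space" and fV :: "'a \<Rightarrow> real"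
    and g :: "'a \<Rightarrow> real" and y :: 'a
  assumes P: "prob_space M" and mV[measurable]: "V \<in> borel_measurable M"
    and mfV': "fV \<in> borel_measurable lborel" and fVnn: "\<And>x. fV x \<ge> 0"
    and dV: "distributed M lborel V (\<lambda>x. ennreal (fV x))"
    and AEc: "AE \<omega> in lborel. charfun M V \<omega> \<noteq> 0"
    and Xi: "lam g fV y \<in> Xi0"
    and iF: "integrable lborel (fourier (lam g fV y))"
    and iQ: "integrable lborel (Qfun M V g fV y)"
begin

sublocale PM: prob_space M by (rule P)

abbreviation "Q \<equiv> Qfun M V g fV y"
abbreviation "q \<equiv> inv_fourier (Qfun M V g fV y)"
abbreviation "lm \<equiv> lam g fV y"

lemma mfV[measurable]: "fV \<in> borel_measurable borel" using mfV' by simp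

lemma mQ[measurable]: "Q \<in> borel_measurable borel"
  using borel_measurable_integrable[OF iQ] by simp

lemma lm_props: "continuous_on UNIV lm" "(lm \<longlongrightarrow> 0) at_infinity" "integrable lborel lm"
  using Xi by (auto simp: Xi0_def)

lemma mlm[measurable]: "lm \<in> borel_measurable borel"
  using lm_props(1) by (rule borel_measurable_continuous_onI)

lemma mq[measurable]: "q \<in> borel_measurable borel"
  unfolding inv_fourier_def[abs_def] by measurable

definition "Bq = (1 / (2 * pi) ^ DIM('a)) * (\<integral>w. norm (Q w) \<partial>lborel)"

lemma q_bound: "norm (q z) \<le> Bq"
proof -
  have "norm (\<integral>w. cis (- (w \<bullet> z)) * Q w \<partial>lborel) \<le> (\<integral>w. norm (cis (- (w \<bullet> z)) * Q w) \<partial>lborel)"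
    by (rule integral_norm_bound)
  also have "\<dots> = (\<integral>w. norm (Q w) \<partial>lborel)" by (simp add: norm_mult)
  moreover have "norm (q z) = (1 / (2 * pi) ^ DIM('a)) * norm (\<integral>w. cis (- (w \<bullet> z)) * Q w \<partial>lborel)"
    unfolding inv_fourier_def norm_mult norm_of_real by simp
  ultimately show ?thesis
    unfolding Bq_def by (auto intro!: divide_right_mono)
qed

lemma EV:
  fixes h :: "'a \<Rightarrow> 'c::{banach, second_countable_topology}"
  assumes [measurable]: "h \<in> borel_measurable borel"
  shows "(\<integral>m. h (V m) \<partial>M) = (\<integral>u. fV u *\<^sub>R h u \<partial>lborel)"
    and "integrable M (\<lambda>m. h (V m)) \<longleftrightarrow> integrable lborel (\<lambda>u. fV u *\<^sub>R h u)"
proof -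
  have d: "distr M lborel V = density lborel (\<lambda>x. ennreal (fV x))"
    using dV by (simp add: distributed_def)
  have "(\<integral>m. h (V m) \<partial>M) = integral\<^sup>L (distr M lborel V) h"
    by (subst integral_distr) auto
  also have "\<dots> = (\<integral>u. fV u *\<^sub>R h u \<partial>lborel)"
    unfolding d by (subst integral_density) (auto simp: fVnn)
  finally show "(\<integral>m. h (V m) \<partial>M) = (\<integral>u. fV u *\<^sub>R h u \<partial>lborel)" .
  have "integrable M (\<lambda>m. h (V m)) \<longleftrightarrow> integrable (distr M lborel V) h"
    by (subst integrable_distr_eq) auto
  also have "\<dots> \<longleftrightarrow> integrable lborel (\<lambda>u. fV u *\<^sub>R h u)"
    unfolding d by (subst integrable_density) (auto simp: fVnn)
  finally show "integrable M (\<lambda>m. h (V m)) \<longleftrightarrow> integrable lborel (\<lambda>u. fV u *\<^sub>R h u)" .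
qed

lemma fV_int: "integrable lborel fV" "(\<integral>u. fV u \<partial>lborel) = 1"
  using EV[where h="\<lambda>_. 1::real"] PM.prob_space by simp_all

lemma fV_shift: "integrable lborel (\<lambda>z. fV (z - x))" "(\<integral>z. fV (z - x) \<partial>lborel) = 1"
  using lborel_translate[where f=fV and a="-x"] fV_int by simp_all

lemma mcharfun[measurable]: "charfun M V \<in> borel_measurable borel"
  unfolding charfun_def[abs_def] by measurable

lemma mF[measurable]: "fourier lm \<in> borel_measurable borel"
  using borel_measurable_integrable[OF iF] by simp

lemma E1: "(\<integral>m. q (x + V m) \<partial>M) = lm x"
proof -
  define c0 where "c0 = complex_of_real (1 / (2 * pi) ^ DIM('a))"
  define F where "F = (\<lambda>(m, w). cis (- (w \<bullet> x)) * Q w * cis ((- w) \<bullet> V m))"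
  have PS: "pair_sigma_finite M (lborel :: 'a measure)"
    by (intro pair_sigma_finite.intro PM.sigma_finite_measure_axioms lborel.sigma_finite_measure_axioms)
  have mF[measurable]: "F \<in> borel_measurable (M \<Otimes>\<^sub>M lborel)" unfolding F_def by measurable
  have nF: "norm (F (m, w)) = norm (Q w)" for m w by (simp add: F_def norm_mult)
  have intF: "integrable (M \<Otimes>\<^sub>M lborel) F"
  proof (rule pair_sigma_finite.Fubini_integrable[OF PS mF])
    show "integrable M (\<lambda>m. \<integral>w. norm (F (m, w)) \<partial>lborel)" unfolding nF by simp
    show "AE m in M. integrable lborel (\<lambda>w. F (m, w))"
      by (intro AE_I2 Bochner_Integration.integrable_bound[OF iQ]) (auto simp: nF)
  qed
  have q_eq: "q (x + V m) = c0 * (\<integral>w. F (m, w) \<partial>lborel)" for m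
  proof -
    have "cis (- (w \<bullet> (x + V m))) * Q w = F (m, w)" for w
      unfolding F_def by (simp add: inner_add_right cis_mult mult_ac)
    then show ?thesis unfolding inv_fourier_def c0_def by simp
  qed
  have "(\<integral>m. q (x + V m) \<partial>M) = c0 * (\<integral>m. (\<integral>w. F (m, w) \<partial>lborel) \<partial>M)"
    unfolding q_eq by simp
  also have "(\<integral>m. (\<integral>w. F (m, w) \<partial>lborel) \<partial>M) = (\<integral>w. (\<integral>m. F (m, w) \<partial>M) \<partial>lborel)"
    using pair_sigma_finite.Fubini_integral[OF PS, of "\<lambda>m w. F (m, w)"] intF by simp
  also have "\<dots> = (\<integral>w. cis (- (w \<bullet> x)) * fourier lm w \<partial>lborel)"
  proof (rule integral_cong_AE)
    show "(\<lambda>w. \<integral>m. F (m, w) \<partial>M) \<in> borel_measurable lborel" by measurable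
    show "(\<lambda>w. cis (- (w \<bullet> x)) * fourier lm w) \<in> borel_measurable lborel" by measurable
    have "AE w in lborel. charfun M V (- w) \<noteq> 0"
      by (rule AE_reflect) (auto simp: AEc)
    then show "AE w in lborel. (\<integral>m. F (m, w) \<partial>M) = cis (- (w \<bullet> x)) * fourier lm w"
    proof (rule AE_mp, intro AE_I2 impI)
      fix w :: 'a assume nz: "charfun M V (- w) \<noteq> 0"
      have "(\<integral>m. F (m, w) \<partial>M) = cis (- (w \<bullet> x)) * Q w * charfun M V (- w)"
        unfolding F_def charfun_def by simp
      moreover have "Q w * charfun M V (- w) = fourier lm w"
        using nz by (simp add: Qfun_def)
      ultimately show "(\<integral>m. F (m, w) \<partial>M) = cis (- (w \<bullet> x)) * fourier lm w"
        by (simp add: mult.assoc)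
    qed
  qed
  also have "c0 * (\<integral>w. cis (- (w \<bullet> x)) * fourier lm w \<partial>lborel) = inv_fourier (fourier lm) x"
    unfolding inv_fourier_def c0_def ..
  also have "\<dots> = lm x"
    using fourier_inversion[OF lm_props iF] .
  finally show ?thesis .
qed

lemma E2:
  assumes fm: "finite_measure \<mu>" and s: "sets \<mu> = sets borel"
  shows "integrable lborel (\<lambda>z. q z * complex_of_real (\<integral>x. fV (z - x) \<partial>\<mu>))"
    and "(\<integral>z. q z * complex_of_real (\<integral>x. fV (z - x) \<partial>\<mu>) \<partial>lborel) = (\<integral>x. lm x \<partial>\<mu>)"
proof -
  interpret MU: finite_measure \<mu> by (rule fm)
  have [measurable_cong]: "sets \<mu> = sets borel" by (rule s)
  have PS2: "pair_sigma_finite \<mu> (lborel :: 'a measure)"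
    by (intro pair_sigma_finite.intro MU.sigma_finite_measure_axioms lborel.sigma_finite_measure_axioms)
  have PS3: "pair_sigma_finite (lborel :: 'a measure) \<mu>"
    by (intro pair_sigma_finite.intro MU.sigma_finite_measure_axioms lborel.sigma_finite_measure_axioms)
  define F where "F = (\<lambda>(x, z). q z * complex_of_real (fV (z - x)))"
  have mF[measurable]: "F \<in> borel_measurable (\<mu> \<Otimes>\<^sub>M lborel)" unfolding F_def by measurable
  have nF: "norm (F (x, z)) = norm (q z) * fV (z - x)" for x z
    unfolding F_def by (simp add: norm_mult fVnn)
  have nFb: "norm (F (x, z)) \<le> Bq * fV (z - x)" for x z
    unfolding nF by (intro mult_right_mono q_bound fVnn)
  have mFx[measurable]: "(\<lambda>z. F (x, z)) \<in> borel_measurable borel" for x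
    unfolding F_def case_prod_conv by measurable
  have intz: "integrable lborel (\<lambda>z. F (x, z))" for x
    by (rule Bochner_Integration.integrable_bound[OF fV_shift(1)[of x, THEN integrable_mult_right[of Bq]]])
       (auto intro!: AE_I2 order_trans[OF nFb] abs_ge_self)
  have intzn: "integrable lborel (\<lambda>z. norm (F (x, z)))" for x
    using intz[of x] by simp
  have bz: "(\<integral>z. norm (F (x, z)) \<partial>lborel) \<le> Bq" for x
  proof -
    have "(\<integral>z. norm (F (x, z)) \<partial>lborel) \<le> (\<integral>z. Bq * fV (z - x) \<partial>lborel)"
      by (rule integral_mono[OF intzn]) (auto simp: nFb fV_shift)
    also have "\<dots> = Bq" by (simp add: fV_shift)
    finally show ?thesis .
  qed
  have intF: "integrable (\<mu> \<Otimes>\<^sub>M lborel) F"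
  proof (rule pair_sigma_finite.Fubini_integrable[OF PS2 mF])
    show "integrable \<mu> (\<lambda>x. \<integral>z. norm (F (x, z)) \<partial>lborel)"
    proof (rule MU.integrable_const_bound[where B=Bq])
      show "AE x in \<mu>. norm (\<integral>z. norm (F (x, z)) \<partial>lborel) \<le> Bq"
        using bz by (intro AE_I2) (simp add: integral_nonneg)
    qed measurable
    show "AE x in \<mu>. integrable lborel (\<lambda>z. F (x, z))" using intz by simp
  qed
  have intF': "integrable (lborel \<Otimes>\<^sub>M \<mu>) (\<lambda>(z, x). F (x, z))"
    using pair_sigma_finite.integrable_product_swap[OF PS2 intF] by simp
  have eqz: "(\<integral>x. F (x, z) \<partial>\<mu>) = q z * complex_of_real (\<integral>x. fV (z - x) \<partial>\<mu>)" for z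
    unfolding F_def by simp
  show "integrable lborel (\<lambda>z. q z * complex_of_real (\<integral>x. fV (z - x) \<partial>\<mu>))"
    using pair_sigma_finite.integrable_fst'[OF PS3 intF'] unfolding eqz[symmetric] by simp
  have inner: "(\<integral>z. F (x, z) \<partial>lborel) = lm x" for x
  proof -
    have mf: "(\<lambda>z. F (x, z)) \<in> borel_measurable borel" by (rule mFx)
    have "(\<integral>z. F (x, z) \<partial>lborel) = (\<integral>z. F (x, z + x) \<partial>lborel)"
      using lborel_translate(1)[OF mf, of x] by simp
    also have "\<dots> = (\<integral>u. fV u *\<^sub>R q (x + u) \<partial>lborel)"
      unfolding F_def by (simp add: scaleR_conv_of_real add.commute mult.commute)
    also have "\<dots> = (\<integral>m. q (x + V m) \<partial>M)"
      by (subst EV(1)) auto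
    also have "\<dots> = lm x" by (rule E1)
    finally show ?thesis .
  qed
  have "(\<integral>z. (\<integral>x. F (x, z) \<partial>\<mu>) \<partial>lborel) = (\<integral>x. (\<integral>z. F (x, z) \<partial>lborel) \<partial>\<mu>)"
    using pair_sigma_finite.Fubini_integral[OF PS2, of "\<lambda>x z. F (x, z)"] intF by simp
  then show "(\<integral>z. q z * complex_of_real (\<integral>x. fV (z - x) \<partial>\<mu>) \<partial>lborel) = (\<integral>x. lm x \<partial>\<mu>)"
    unfolding eqz inner .
qed

lemma Q_neg: "Q (- w) = cnj (Q w)"
proof -
  have f1: "fourier lm (- w) = cnj (fourier lm w)"
  proof -
    have "cnj (fourier lm w) = (\<integral>x. cnj (cis (w \<bullet> x) * lm x) \<partial>lborel)"
      unfolding fourier_def by (rule Bochner_Integration.integral_cnj[symmetric])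
    also have "\<dots> = fourier lm (- w)"
      unfolding fourier_def lam_def by (simp add: cis_cnj)
    finally show ?thesis ..
  qed
  have c1: "charfun M V w = cnj (charfun M V (- w))"
  proof -
    have "cnj (charfun M V (- w)) = (\<integral>m. cnj (cis ((- w) \<bullet> V m)) \<partial>M)"
      unfolding charfun_def by (rule Bochner_Integration.integral_cnj[symmetric])
    also have "\<dots> = charfun M V w"
      unfolding charfun_def by (simp add: cis_cnj)
    finally show ?thesis ..
  qed
  show ?thesis
    unfolding Qfun_def using c1 f1 by auto
qed

lemma q_real: "Im (q z) = 0"
proof -
  define J where "J = (\<integral>w. cis (- (w \<bullet> z)) * Q w \<partial>lborel)"
  have mJ: "(\<lambda>w. cis (- (w \<bullet> z)) * Q w) \<in> borel_measurable borel" by measurable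
  have "J = (\<integral>w. cis (- ((- w) \<bullet> z)) * Q (- w) \<partial>lborel)"
    unfolding J_def using lborel_reflect[OF mJ] by simp
  also have "\<dots> = (\<integral>w. cnj (cis (- (w \<bullet> z)) * Q w) \<partial>lborel)"
    by (simp add: Q_neg cis_cnj)
  also have "\<dots> = cnj J" unfolding J_def by (rule Bochner_Integration.integral_cnj)
  finally have "J = cnj J" .
  then have "Im J = Im (cnj J)" by (rule arg_cong)
  then have "Im J = 0" by simp
  then show ?thesis unfolding inv_fourier_def J_def[symmetric] by simp
qed

end



theorem proposition5:
  fixes M :: "'b measure" and X V :: "'b \<Rightarrow> 'a::euclidean_space"
    and fV :: "'a \<Rightarrow> real" and g :: "'a \<Rightarrow> real" and y :: 'a
  assumes "prob_space M"
    and "X \<in> borel_measurable M" and "V \<in> borel_measurable M"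
    and "prob_space.indep_var M borel X borel V"
    and "fV \<in> borel_measurable lborel" and "\<And>x. fV x \<ge> 0"
    and "distributed M lborel V (\<lambda>x. ennreal (fV x))"
    and "AE \<omega> in lborel. charfun M V \<omega> \<noteq> 0"
    and "g \<in> borel_measurable borel"
    and "lam g fV y \<in> Xi0"
    and "integrable lborel (fourier (lam g fV y))"
    and "integrable lborel (Qfun M V g fV y)"
  shows "(\<forall>\<mu>1 \<mu>2. finite_measure \<mu>1 \<and> finite_measure \<mu>2 \<and>
             sets \<mu>1 = sets borel \<and> sets \<mu>2 = sets borel \<longrightarrow>
           T_signed g fV y \<mu>1 \<mu>2 =
             (LINT z|lborel. inv_fourier (Qfun M V g fV y) z * complex_of_real (conv_signed fV \<mu>1 \<mu>2 z)))
       \<and> (\<forall>z. Im (inv_fourier (Qfun M V g fV y) z) = 0)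
       \<and> (densY M X fV y > 0 \<longrightarrow>
           complex_of_real (cond_exp_at M X fV g y) =
             complex_of_real (1 / densY M X fV y) *
               (LINT z|lborel. inv_fourier (Qfun M V g fV y) z * complex_of_real (densY M X fV z))
           \<and> complex_of_real (cond_exp_at M X fV g y) =
             complex_of_real (1 / densY M X fV y) *
               (LINT m|M. inv_fourier (Qfun M V g fV y) (X m + V m)))"
proof -
  note a = assms
  have ST: "setting M V fV g y"
    unfolding setting_def using assms by blast
  interpret S: setting M V fV g y by (rule ST)
  have [measurable]: "X \<in> borel_measurable M" "V \<in> borel_measurable M" using assms by auto
  have part1: "\<forall>\<mu>1 \<mu>2. finite_measure \<mu>1 \<and> finite_measure \<mu>2 \<and>
             sets \<mu>1 = sets borel \<and> sets \<mu>2 = sets borel \<longrightarrow>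
           T_signed g fV y \<mu>1 \<mu>2 =
             (LINT z|lborel. inv_fourier (Qfun M V g fV y) z * complex_of_real (conv_signed fV \<mu>1 \<mu>2 z))"
  proof (intro allI impI, elim conjE)
    fix \<mu>1 \<mu>2 :: "'a measure"
    assume f1: "finite_measure \<mu>1" and f2: "finite_measure \<mu>2"
      and s1: "sets \<mu>1 = sets borel" and s2: "sets \<mu>2 = sets borel"
    note E2a = S.E2[OF f1 s1] and E2b = S.E2[OF f2 s2]
    have eq: "inv_fourier (Qfun M V g fV y) z * complex_of_real (conv_signed fV \<mu>1 \<mu>2 z)
       = inv_fourier (Qfun M V g fV y) z * complex_of_real (\<integral>x. fV (z - x) \<partial>\<mu>1)
         - inv_fourier (Qfun M V g fV y) z * complex_of_real (\<integral>x. fV (z - x) \<partial>\<mu>2)" for z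
      by (simp add: conv_signed_def algebra_simps)
    show "T_signed g fV y \<mu>1 \<mu>2 =
             (LINT z|lborel. inv_fourier (Qfun M V g fV y) z * complex_of_real (conv_signed fV \<mu>1 \<mu>2 z))"
      unfolding eq
      by (subst Bochner_Integration.integral_diff[OF E2a(1) E2b(1)]) (simp add: E2a(2) E2b(2) T_signed_def)
  qed
  have part2: "\<forall>z. Im (inv_fourier (Qfun M V g fV y) z) = 0" using S.q_real by blast
  define PX where "PX = distr M borel X"
  define PV where "PV = distr M borel V"
  interpret PX: prob_space PX unfolding PX_def by (rule S.PM.prob_space_distr) simp
  interpret PV: prob_space PV unfolding PV_def by (rule S.PM.prob_space_distr) simp
  have sPX[measurable_cong]: "sets PX = sets borel" unfolding PX_def by simp
  have sPV[measurable_cong]: "sets PV = sets borel" unfolding PV_def by simp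
  have A: "(LINT z|lborel. inv_fourier (Qfun M V g fV y) z * complex_of_real (densY M X fV z))
      = (\<integral>x. lam g fV y x \<partial>PX)"
    using S.E2(2)[OF PX.finite_measure_axioms sPX] unfolding densY_def PX_def by simp
  have mq2[measurable]: "(\<lambda>(a, b). inv_fourier (Qfun M V g fV y) (a + b)) \<in> borel_measurable (borel \<Otimes>\<^sub>M borel)"
    by measurable
  have B: "(LINT m|M. inv_fourier (Qfun M V g fV y) (X m + V m)) = (\<integral>x. lam g fV y x \<partial>PX)"
  proof -
    have ind: "PX \<Otimes>\<^sub>M PV = distr M (borel \<Otimes>\<^sub>M borel) (\<lambda>m. (X m, V m))"
      using assms(4) unfolding PX_def PV_def S.PM.indep_var_distribution_eq by blast
    have PS: "pair_sigma_finite PX PV"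
      by (intro pair_sigma_finite.intro PX.sigma_finite_measure_axioms PV.sigma_finite_measure_axioms)
    let ?h = "\<lambda>(a, b). inv_fourier (Qfun M V g fV y) (a + b)"
    have "(LINT m|M. inv_fourier (Qfun M V g fV y) (X m + V m)) = integral\<^sup>L (distr M (borel \<Otimes>\<^sub>M borel) (\<lambda>m. (X m, V m))) ?h"
      by (subst integral_distr) auto
    also have "\<dots> = integral\<^sup>L (PX \<Otimes>\<^sub>M PV) ?h" unfolding ind ..
    also have "\<dots> = (\<integral>a. (\<integral>b. ?h (a, b) \<partial>PV) \<partial>PX)"
    proof (rule pair_sigma_finite.integral_fst'[OF PS, symmetric])
      have "integrable M (\<lambda>m. ?h (X m, V m))"
        by (rule S.PM.integrable_const_bound[where B=S.Bq]) (auto simp: S.q_bound)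
      then have "integrable (distr M (borel \<Otimes>\<^sub>M borel) (\<lambda>m. (X m, V m))) ?h"
        by (subst integrable_distr_eq) auto
      then show "integrable (PX \<Otimes>\<^sub>M PV) ?h" unfolding ind .
    qed
    also have "\<dots> = (\<integral>a. lam g fV y a \<partial>PX)"
    proof (rule Bochner_Integration.integral_cong[OF refl])
      fix a
      have "(\<integral>b. ?h (a, b) \<partial>PV) = (LINT m|M. inv_fourier (Qfun M V g fV y) (a + V m))"
        unfolding PV_def by (subst integral_distr) auto
      also have "\<dots> = lam g fV y a" by (rule S.E1)
      finally show "(\<integral>b. ?h (a, b) \<partial>PV) = lam g fV y a" .
    qed
    finally show ?thesis .
  qed
  have C: "complex_of_real (cond_exp_at M X fV g y) =
      complex_of_real (1 / densY M X fV y) * (\<integral>x. lam g fV y x \<partial>PX)"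
    unfolding cond_exp_at_def lam_def PX_def integral_complex_of_real by (rule of_real_mult)
  show ?thesis
    using part1 part2 A B C by simp
qed


end
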